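(* For every graph $G$, $\mathrm{ltp}(G)-1\le \mathrm{tw}(G)\le 2\,\mathrm{ltp}(G)-1$.
   Context: For a tree $T$ and integer $k$, $T[K_k]$ denotes the lexicographic product: the graph obtained from $T$ by replacing each vertex by a copy of $K_k$ and each edge by a copy of $K_{k,k}$ between the corresponding copies. The lexicographic tree product number $\mathrm{ltp}(G)$ is the minimum integer $k$ such that $G$ is a minor of $T[K_k]$ for some tree $T$. The treewidth $\mathrm{tw}(G)$ is the minimum over tree decompositions of $G$ (a tree with bags $B_x\subseteq V(G)$ such that each vertex's bags form a non-empty subtree and each edge lies in some bag) of the maximum bag size minus $1$. *)

theory Defs
  imports Main
begin

definition graph :: "'a set \<Rightarrow> 'a set set \<Rightarrow> bool" where
  "graph V E \<longleftrightarrow> finite V \<and> (\<forall>e\<in>E. \<exists>u v. e = {u, v} \<and> u \<noteq> v \<and> u \<in> V \<and> v \<in> V)"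

definition connected_in :: "'a set set \<Rightarrow> 'a set \<Rightarrow> bool" where
  "connected_in E S \<longleftrightarrow> S \<noteq> {} \<and>
     (\<forall>u\<in>S. \<forall>v\<in>S. \<exists>p. p \<noteq> [] \<and> hd p = u \<and> last p = v \<and> set p \<subseteq> S \<and>
        (\<forall>i. Suc i < length p \<longrightarrow> {p ! i, p ! Suc i} \<in> E))"

definition acyclic_graph :: "'a set \<Rightarrow> 'a set set \<Rightarrow> bool" where
  "acyclic_graph V E \<longleftrightarrow> \<not> (\<exists>c. distinct c \<and> length c \<ge> 3 \<and> set c \<subseteq> V \<and>
        (\<forall>i. Suc i < length c \<longrightarrow> {c ! i, c ! Suc i} \<in> E) \<and> {last c, hd c} \<in> E)"

definition is_tree :: "'a set \<Rightarrow> 'a set set \<Rightarrow> bool" where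
  "is_tree V E \<longleftrightarrow> graph V E \<and> connected_in E V \<and> acyclic_graph V E"

definition is_minor :: "'a set \<Rightarrow> 'a set set \<Rightarrow> 'b set \<Rightarrow> 'b set set \<Rightarrow> bool" where
  "is_minor V E W F \<longleftrightarrow> (\<exists>\<beta> :: 'a \<Rightarrow> 'b set.
      (\<forall>v\<in>V. \<beta> v \<subseteq> W \<and> connected_in F (\<beta> v)) \<and>
      (\<forall>u\<in>V. \<forall>v\<in>V. u \<noteq> v \<longrightarrow> \<beta> u \<inter> \<beta> v = {}) \<and>
      (\<forall>u v. {u, v} \<in> E \<longrightarrow> (\<exists>x\<in>\<beta> u. \<exists>y\<in>\<beta> v. {x, y} \<in> F)))"

definition lex_verts :: "'b set \<Rightarrow> nat \<Rightarrow> ('b \<times> nat) set" where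
  "lex_verts VT k = VT \<times> {0..<k}"

definition lex_edges :: "'b set \<Rightarrow> 'b set set \<Rightarrow> nat \<Rightarrow> ('b \<times> nat) set set" where
  "lex_edges VT ET k = {{(x, i), (y, j)} | x y i j. x \<in> VT \<and> y \<in> VT \<and> i < k \<and> j < k \<and>
      ((x = y \<and> i \<noteq> j) \<or> {x, y} \<in> ET)}"

text \<open>ltp(G): least k such that G is a minor of T[K_k] for some tree T
  (trees taken, up to isomorphism, on vertex set of type nat).\<close>
definition ltp :: "'a set \<Rightarrow> 'a set set \<Rightarrow> nat" where
  "ltp V E = (LEAST k. \<exists>(VT :: nat set) ET. is_tree VT ET \<and>
      is_minor V E (lex_verts VT k) (lex_edges VT ET k))"

definition tree_decomposition :: "'a set \<Rightarrow> 'a set set \<Rightarrow> nat set \<Rightarrow> nat set set \<Rightarrow> (nat \<Rightarrow> 'a set) \<Rightarrow> bool" where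
  "tree_decomposition V E VT ET B \<longleftrightarrow> is_tree VT ET \<and> (\<forall>x\<in>VT. B x \<subseteq> V) \<and>
      (\<forall>v\<in>V. connected_in ET {x \<in> VT. v \<in> B x}) \<and>
      (\<forall>e\<in>E. \<exists>x\<in>VT. e \<subseteq> B x)"

definition treewidth :: "'a set \<Rightarrow> 'a set set \<Rightarrow> int" where
  "treewidth V E = int (LEAST m. \<exists>VT ET B. tree_decomposition V E VT ET B \<and>
      (\<forall>x\<in>VT. card (B x) \<le> m)) - 1"

end

theory Submission imports Defs begin

definition rel_on :: "'a set set \<Rightarrow> 'a set \<Rightarrow> ('a \<times> 'a) set" where
  "rel_on E S = {(a,b). a \<in> S \<and> b \<in> S \<and> {a,b} \<in> E}"

lemma path_rtrancl:
  "p \<noteq> [] \<Longrightarrow> set p \<subseteq> S \<Longrightarrow> (\<forall>i. Suc i < length p \<longrightarrow> {p!i, p!Suc i} \<in> E)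
   \<Longrightarrow> (hd p, last p) \<in> (rel_on E S)\<^sup>*"
proof (induction p)
  case Nil then show ?case by simp
next
  case (Cons a p)
  show ?case
  proof (cases "p = []")
    case True then show ?thesis by simp
  next
    case False
    have e: "{a, hd p} \<in> E" using Cons.prems(3)[rule_format, of 0] False
      by (simp add: hd_conv_nth)
    have "\<forall>i. Suc i < length p \<longrightarrow> {p!i, p!Suc i} \<in> E"
    proof (intro allI impI)
      fix i assume "Suc i < length p"
      then show "{p!i, p!Suc i} \<in> E" using Cons.prems(3)[rule_format, of "Suc i"] by simp
    qed
    then have "(hd p, last p) \<in> (rel_on E S)\<^sup>*" using Cons False by simp
    moreover have "(a, hd p) \<in> rel_on E S" using e Cons.prems(2) False
      by (auto simp: rel_on_def)
    ultimately show ?thesis using False by (simp add: converse_rtrancl_into_rtrancl)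
  qed
qed

lemma rtrancl_path:
  assumes "(u,v) \<in> (rel_on E S)\<^sup>*" "u \<in> S"
  shows "\<exists>p. p \<noteq> [] \<and> hd p = u \<and> last p = v \<and> set p \<subseteq> S \<and>
        (\<forall>i. Suc i < length p \<longrightarrow> {p ! i, p ! Suc i} \<in> E)"
  using assms(1)
proof (induction rule: rtrancl_induct)
  case base then show ?case using assms(2) by (intro exI[of _ "[u]"]) auto
next
  case (step y z)
  then obtain p where p: "p \<noteq> []" "hd p = u" "last p = y" "set p \<subseteq> S"
    "\<forall>i. Suc i < length p \<longrightarrow> {p ! i, p ! Suc i} \<in> E" by blast
  have yz: "y \<in> S" "z \<in> S" "{y,z} \<in> E" using step(2) by (auto simp: rel_on_def)
  show ?case
  proof (intro exI[of _ "p @ [z]"] conjI allI impI)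
    fix i assume i: "Suc i < length (p @ [z])"
    show "{(p @ [z]) ! i, (p @ [z]) ! Suc i} \<in> E"
    proof (cases "Suc i < length p")
      case True then show ?thesis using p(5) by (simp add: nth_append)
    next
      case False
      then have "Suc i = length p" using i by simp
      then have "p ! i = y" using p(1,3) by (metis diff_Suc_1 last_conv_nth)
      then show ?thesis using \<open>Suc i = length p\<close> yz by (simp add: nth_append)
    qed
  qed (use p yz in auto)
qed

lemma connected_in_iff:
  "connected_in E S \<longleftrightarrow> S \<noteq> {} \<and> (\<forall>u\<in>S. \<forall>v\<in>S. (u,v) \<in> (rel_on E S)\<^sup>*)"
  unfolding connected_in_def
  using path_rtrancl rtrancl_path by metis

lemma rtrancl_map:
  assumes "(a,b) \<in> R\<^sup>*" "\<And>x y. (x,y) \<in> R \<Longrightarrow> (f x, f y) \<in> R'\<^sup>*"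
  shows "(f a, f b) \<in> R'\<^sup>*"
  using assms(1)
  by (induction rule: rtrancl_induct) (auto intro: rtrancl_trans assms(2))


lemma graph_edge: "graph V E \<Longrightarrow> {a,b} \<in> E \<Longrightarrow> a \<noteq> b \<and> a \<in> V \<and> b \<in> V"
  unfolding graph_def by (metis doubleton_eq_iff)

lemma leaf_exists:
  assumes g: "graph V E" and ac: "acyclic_graph V E" and ne: "E \<noteq> {}"
  shows "\<exists>l y. {l,y} \<in> E \<and> (\<forall>z. {l,z} \<in> E \<longrightarrow> z = y)"
proof -
  define W where "W = {q. distinct q \<and> set q \<subseteq> V \<and> (\<forall>i. Suc i < length q \<longrightarrow> {q!i, q!Suc i} \<in> E)}"
  obtain e where "e \<in> E" using ne by auto
  then have "\<exists>u v. e = {u,v} \<and> u \<noteq> v \<and> u \<in> V \<and> v \<in> V" using g unfolding graph_def by simp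
  then obtain u w where uw: "{u,w} \<in> E" using \<open>e \<in> E\<close> by metis
  then have uw2: "u \<noteq> w" "u \<in> V" "w \<in> V" using graph_edge[OF g] by auto
  have "[u,w] \<in> W" unfolding W_def
  proof (intro CollectI conjI allI impI)
    fix i assume "Suc i < length [u,w]"
    then have "i = 0" by simp
    then show "{[u,w] ! i, [u,w] ! Suc i} \<in> E" using uw by simp
  qed (use uw2 in auto)
  moreover have "\<forall>q. q \<in> W \<longrightarrow> length q < Suc (card V)"
  proof (intro allI impI)
    fix q assume "q \<in> W"
    then have "distinct q" "set q \<subseteq> V" unfolding W_def by auto
    then show "length q < Suc (card V)" using g unfolding graph_def
      by (metis card_mono distinct_card less_Suc_eq_le)
  qed
  ultimately obtain q where q: "q \<in> W" and qmax: "\<forall>r. r \<in> W \<longrightarrow> length r \<le> length q"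
    using Lattices_Big.ex_has_greatest_nat[of "\<lambda>q. q \<in> W" "[u,w]" length "Suc (card V)"] by blast
  have qd: "distinct q" "set q \<subseteq> V" "\<forall>i. Suc i < length q \<longrightarrow> {q!i, q!Suc i} \<in> E"
    using q unfolding W_def by auto
  have lq: "length q \<ge> 2" using qmax \<open>[u,w] \<in> W\<close> by fastforce
  have e01: "{q!0, q!1} \<in> E" using qd(3) lq by auto
  have "\<forall>z. {q!0,z} \<in> E \<longrightarrow> z = q!1"
  proof (intro allI impI)
    fix z assume z: "{q!0,z} \<in> E"
    then have zz: "q!0 \<noteq> z" "z \<in> V" using graph_edge[OF g] by auto
    show "z = q!1"
    proof (cases "z \<in> set q")
      case False
      have "z # q \<in> W" unfolding W_def
      proof (intro CollectI conjI allI impI)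
        fix i assume i: "Suc i < length (z # q)"
        show "{(z#q)!i, (z#q)!Suc i} \<in> E"
        proof (cases i)
          case 0 then show ?thesis using z by (simp add: insert_commute)
        next
          case (Suc j) then show ?thesis using qd(3) i by simp
        qed
      qed (use False qd zz in simp_all)
      then show ?thesis using qmax by fastforce
    next
      case True
      then obtain j where j: "j < length q" "q!j = z" by (metis in_set_conv_nth)
      have "j \<noteq> 0" using j zz by (cases j) auto
      show ?thesis
      proof (rule ccontr)
        assume "z \<noteq> q!1"
        then have "j \<noteq> 1" using j by auto
        then have j2: "j \<ge> 2" using \<open>j \<noteq> 0\<close> by linarith
        define c where "c = take (Suc j) q"
        have "distinct c" "length c \<ge> 3" "set c \<subseteq> V"
          using qd j j2 unfolding c_def by (auto dest: in_set_takeD)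
        moreover have "\<forall>i. Suc i < length c \<longrightarrow> {c ! i, c ! Suc i} \<in> E"
          using qd(3) j unfolding c_def by auto
        moreover have "last c = z" using j unfolding c_def
          by (simp add: take_Suc_conv_app_nth)
        moreover have "q \<noteq> []" using j by auto
        then have "hd c = q!0" unfolding c_def by (simp add: hd_conv_nth)
        ultimately show False using ac z unfolding acyclic_graph_def
          by (metis insert_commute)
      qed
    qed
  qed
  then show ?thesis using e01 by blast
qed

lemma graph_edgeE: "graph V E \<Longrightarrow> e \<in> E \<Longrightarrow> \<exists>a b. e = {a,b} \<and> a \<noteq> b \<and> a \<in> V \<and> b \<in> V"
  by (simp add: graph_def)

lemma acyclic_mono: "acyclic_graph V E \<Longrightarrow> V' \<subseteq> V \<Longrightarrow> E' \<subseteq> E \<Longrightarrow> acyclic_graph V' E'"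
  unfolding acyclic_graph_def by blast

lemma orientation:
  assumes "graph V E" "acyclic_graph V E"
  shows "\<exists>p. (\<forall>x. p x = x \<or> {x, p x} \<in> E) \<and> (\<forall>x y. {x,y} \<in> E \<longrightarrow> p x = y \<or> p y = x)"
  using assms
proof (induction "card V" arbitrary: V E rule: less_induct)
  case less
  show ?case
  proof (cases "E = {}")
    case True then show ?thesis by (intro exI[of _ id]) auto
  next
    case False
    obtain l y where ly: "{l,y} \<in> E" "\<forall>z. {l,z} \<in> E \<longrightarrow> z = y"
      using leaf_exists[OF less.prems False] by blast
    have lV: "l \<in> V" "l \<noteq> y" using graph_edge[OF less.prems(1) ly(1)] by auto
    define V' where "V' = V - {l}"
    define E' where "E' = {e \<in> E. l \<notin> e}"
    have fin: "finite V" using less.prems(1) unfolding graph_def by auto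
    have c: "card V' < card V" unfolding V'_def by (rule card_Diff1_less[OF fin lV(1)])
    have g': "graph V' E'" unfolding graph_def
    proof (intro conjI ballI)
      show "finite V'" using fin unfolding V'_def by simp
      fix e assume "e \<in> E'"
      then have e: "e \<in> E" "l \<notin> e" unfolding E'_def by auto
      obtain a b where "e = {a,b}" "a \<noteq> b" "a \<in> V" "b \<in> V"
        using graph_edgeE[OF less.prems(1) e(1)] by blast
      then show "\<exists>u v. e = {u,v} \<and> u \<noteq> v \<and> u \<in> V' \<and> v \<in> V'"
        using e(2) unfolding V'_def by blast
    qed
    have a': "acyclic_graph V' E'" by (rule acyclic_mono[OF less.prems(2)]) (auto simp: V'_def E'_def)
    obtain p' where p': "\<forall>x. p' x = x \<or> {x, p' x} \<in> E'" "\<forall>x z. {x,z} \<in> E' \<longrightarrow> p' x = z \<or> p' z = x"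
      using less.hyps[OF c g' a'] by blast
    define p where "p = p'(l := y)"
    have 1: "\<forall>x. p x = x \<or> {x, p x} \<in> E"
    proof
      fix x show "p x = x \<or> {x, p x} \<in> E"
      proof (cases "x = l")
        case True then show ?thesis using ly(1) unfolding p_def by simp
      next
        case False then have "p x = p' x" unfolding p_def by simp
        then show ?thesis using p'(1) unfolding E'_def by auto
      qed
    qed
    have 2: "\<forall>x z. {x,z} \<in> E \<longrightarrow> p x = z \<or> p z = x"
    proof (intro allI impI)
      fix x z assume xz: "{x,z} \<in> E"
      show "p x = z \<or> p z = x"
      proof (cases "x = l \<or> z = l")
        case True
        then show ?thesis
        proof
          assume "x = l"
          then have "z = y" using xz ly(2) by simp
          then show ?thesis using \<open>x = l\<close> unfolding p_def by simp
        next
          assume "z = l"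
          then have "{l,x} \<in> E" using xz by (simp add: insert_commute)
          then have "x = y" using ly(2) by simp
          then show ?thesis using \<open>z = l\<close> unfolding p_def by simp
        qed
      next
        case False
        then have "{x,z} \<in> E'" using xz unfolding E'_def by auto
        then show ?thesis using p' False unfolding p_def by auto
      qed
    qed
    show ?thesis using 1 2 by blast
  qed
qed

lemma lex_edgeI:
  "x \<in> VT \<Longrightarrow> y \<in> VT \<Longrightarrow> i < k \<Longrightarrow> j < k \<Longrightarrow> (x = y \<and> i \<noteq> j) \<or> {x,y} \<in> ET
   \<Longrightarrow> {(x,i),(y,j)} \<in> lex_edges VT ET k"
  unfolding lex_edges_def by blast

lemma td_to_minor:
  assumes g: "graph V E" and td: "tree_decomposition V E VT ET B" and bd: "\<forall>x\<in>VT. card (B x) \<le> m"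
  shows "is_minor V E (lex_verts VT m) (lex_edges VT ET m)"
proof -
  have tdd: "is_tree VT ET" "\<forall>x\<in>VT. B x \<subseteq> V" "\<forall>v\<in>V. connected_in ET {x \<in> VT. v \<in> B x}"
     "\<forall>e\<in>E. \<exists>x\<in>VT. e \<subseteq> B x" using td unfolding tree_decomposition_def by auto
  have fV: "finite V" using g unfolding graph_def by auto
  have "\<forall>x\<in>VT. \<exists>f. bij_betw f (B x) {0..<card (B x)}"
    using tdd(2) fV by (meson ex_bij_betw_finite_nat finite_subset)
  then obtain h where h: "\<forall>x\<in>VT. bij_betw (h x) (B x) {0..<card (B x)}" by metis
  have hlt: "h x v < m" if "x \<in> VT" "v \<in> B x" for x v
  proof -
    have "h x v \<in> {0..<card (B x)}" using h that bij_betwE by blast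
    then show ?thesis using bd that by fastforce
  qed
  have hinj: "u = w" if "x \<in> VT" "u \<in> B x" "w \<in> B x" "h x u = h x w" for x u w
    using h that bij_betw_imp_inj_on inj_onD by metis
  define \<beta> where "\<beta> v = {(x, h x v) | x. x \<in> VT \<and> v \<in> B x}" for v
  have mem: "(x,i) \<in> \<beta> v \<longleftrightarrow> x \<in> VT \<and> v \<in> B x \<and> i = h x v" for x i v
    unfolding \<beta>_def by auto
  show ?thesis unfolding is_minor_def
  proof (intro exI[of _ \<beta>] conjI ballI allI impI)
    fix v assume v: "v \<in> V"
    show "\<beta> v \<subseteq> lex_verts VT m"
      unfolding lex_verts_def \<beta>_def using hlt by auto
    define T where "T = {x \<in> VT. v \<in> B x}"
    have cT: "connected_in ET T" using tdd(3) v unfolding T_def by auto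
    then obtain x0 where "x0 \<in> T" unfolding connected_in_iff by auto
    then have ne: "\<beta> v \<noteq> {}" using mem unfolding T_def by blast
    have "(a,b) \<in> (rel_on (lex_edges VT ET m) (\<beta> v))\<^sup>*" if ab: "a \<in> \<beta> v" "b \<in> \<beta> v" for a b
    proof -
      obtain x where x: "a = (x, h x v)" "x \<in> T" using mem[of "fst a" "snd a" v] ab(1) unfolding T_def by (cases a) auto
      obtain y where y: "b = (y, h y v)" "y \<in> T" using mem[of "fst b" "snd b" v] ab(2) unfolding T_def by (cases b) auto
      have "(x,y) \<in> (rel_on ET T)\<^sup>*" using cT x y unfolding connected_in_iff by auto
      then have "((\<lambda>x. (x, h x v)) x, (\<lambda>x. (x, h x v)) y) \<in> (rel_on (lex_edges VT ET m) (\<beta> v))\<^sup>*"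
      proof (rule rtrancl_map)
        fix s t assume "(s,t) \<in> rel_on ET T"
        then have st: "s \<in> VT" "t \<in> VT" "v \<in> B s" "v \<in> B t" "{s,t} \<in> ET"
          unfolding rel_on_def T_def by auto
        have "((s, h s v), (t, h t v)) \<in> rel_on (lex_edges VT ET m) (\<beta> v)"
          unfolding rel_on_def using st mem hlt lex_edgeI[of s VT t "h s v" m "h t v" ET] by auto
        then show "((s, h s v), (t, h t v)) \<in> (rel_on (lex_edges VT ET m) (\<beta> v))\<^sup>*" by auto
      qed
      then show ?thesis using x y by simp
    qed
    then show "connected_in (lex_edges VT ET m) (\<beta> v)" unfolding connected_in_iff using ne by blast
  next
    fix u w assume "u \<in> V" "w \<in> V" "u \<noteq> w"
    then show "\<beta> u \<inter> \<beta> w = {}" unfolding \<beta>_def using hinj by auto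
  next
    fix u w assume e: "{u,w} \<in> E"
    then obtain x where x: "x \<in> VT" "{u,w} \<subseteq> B x" using tdd(4) by blast
    have "u \<noteq> w" using graph_edge[OF g e] by auto
    then have "h x u \<noteq> h x w" using hinj x by auto
    then have "{(x, h x u), (x, h x w)} \<in> lex_edges VT ET m"
      using lex_edgeI[of x VT x "h x u" m "h x w" ET] x hlt by auto
    moreover have "(x, h x u) \<in> \<beta> u" "(x, h x w) \<in> \<beta> w" using mem x by auto
    ultimately show "\<exists>a\<in>\<beta> u. \<exists>b\<in>\<beta> w. {a, b} \<in> lex_edges VT ET m" by blast
  qed
qed

lemma lex_edgeD:
  assumes "{(x,i),(y,j)} \<in> lex_edges VT ET k"
  shows "x = y \<or> {x,y} \<in> ET"
proof -
  obtain x' y' i' j' where e: "{(x,i),(y,j)} = {(x',i'),(y',j')}"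
    "(x' = y' \<and> i' \<noteq> j') \<or> {x',y'} \<in> ET"
    using assms unfolding lex_edges_def by blast
  from e(1) have "(x = x' \<and> y = y') \<or> (x = y' \<and> y = x')"
    by (auto simp: doubleton_eq_iff)
  then show ?thesis using e(2) by (auto simp: insert_commute)
qed

lemma minor_to_td:
  assumes g: "graph V E" and t: "is_tree VT ET"
    and m: "is_minor V E (lex_verts VT k) (lex_edges VT ET k)"
  shows "\<exists>B. tree_decomposition V E VT ET B \<and> (\<forall>x\<in>VT. card (B x) \<le> 2 * k)"
proof -
  let ?F = "lex_edges VT ET k"
  obtain \<beta> where b1: "\<forall>v\<in>V. \<beta> v \<subseteq> lex_verts VT k \<and> connected_in ?F (\<beta> v)"
    and b2: "\<forall>u\<in>V. \<forall>v\<in>V. u \<noteq> v \<longrightarrow> \<beta> u \<inter> \<beta> v = {}"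
    and b3: "\<forall>u v. {u, v} \<in> E \<longrightarrow> (\<exists>x\<in>\<beta> u. \<exists>y\<in>\<beta> v. {x, y} \<in> ?F)"
    using m unfolding is_minor_def by blast
  have gt: "graph VT ET" "acyclic_graph VT ET" using t unfolding is_tree_def by auto
  obtain p where p1: "\<forall>x. p x = x \<or> {x, p x} \<in> ET" and p2: "\<forall>x y. {x,y} \<in> ET \<longrightarrow> p x = y \<or> p y = x"
    using orientation[OF gt] by blast
  define C where "C z = {v \<in> V. \<exists>i. (z,i) \<in> \<beta> v}" for z
  define B where "B x = C x \<union> C (p x)" for x
  have bVT: "x \<in> VT" "i < k" if "v \<in> V" "(x,i) \<in> \<beta> v" for v x i
  proof -
    have "(x,i) \<in> VT \<times> {0..<k}" using b1 that unfolding lex_verts_def by blast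
    then show "x \<in> VT" "i < k" by auto
  qed
  have cardC: "card (C z) \<le> k" for z
  proof -
    define f where "f v = (SOME i. (z,i) \<in> \<beta> v)" for v
    have fz: "(z, f v) \<in> \<beta> v" if "v \<in> C z" for v
      using that unfolding C_def f_def by (auto intro: someI)
    have "inj_on f (C z)"
    proof
      fix u w assume uw: "u \<in> C z" "w \<in> C z" "f u = f w"
      have "(z, f u) \<in> \<beta> u" "(z, f w) \<in> \<beta> w" using fz[OF uw(1)] fz[OF uw(2)] by -
      then have "(z, f u) \<in> \<beta> u \<inter> \<beta> w" using uw(3) by simp
      then show "u = w" using b2 \<open>u \<in> C z\<close> \<open>w \<in> C z\<close> unfolding C_def by blast
    qed
    moreover have "f ` C z \<subseteq> {0..<k}" using fz bVT unfolding C_def by fastforce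
    ultimately have "card (C z) \<le> card {0..<k}" by (rule card_inj_on_le) simp
    then show ?thesis by simp
  qed
  have cardB: "card (B x) \<le> 2 * k" for x
    unfolding B_def using card_Un_le[of "C x" "C (p x)"] cardC[of x] cardC[of "p x"] by linarith
  have "tree_decomposition V E VT ET B"
    unfolding tree_decomposition_def
  proof (intro conjI ballI)
    show "is_tree VT ET" by (rule t)
    fix x show "B x \<subseteq> V" unfolding B_def C_def by auto
  next
    fix v assume v: "v \<in> V"
    define S where "S = {x. \<exists>i. (x,i) \<in> \<beta> v}"
    define T where "T = {x \<in> VT. v \<in> B x}"
    have SVT: "S \<subseteq> VT" unfolding S_def using bVT v by auto
    have Teq: "T = {x \<in> VT. x \<in> S \<or> p x \<in> S}"
      unfolding T_def B_def C_def S_def using v by auto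
    have ST: "S \<subseteq> T" unfolding Teq using SVT by auto
    have cb: "connected_in ?F (\<beta> v)" using b1 v by auto
    have A: "(a,b) \<in> (rel_on ET T)\<^sup>*" if ab: "a \<in> S" "b \<in> S" for a b
    proof -
      obtain i j where ij: "(a,i) \<in> \<beta> v" "(b,j) \<in> \<beta> v" using ab unfolding S_def by auto
      then have "((a,i),(b,j)) \<in> (rel_on ?F (\<beta> v))\<^sup>*" using cb unfolding connected_in_iff by auto
      then have "(fst (a,i), fst (b,j)) \<in> (rel_on ET T)\<^sup>*"
      proof (rule rtrancl_map)
        fix s t assume st: "(s,t) \<in> rel_on ?F (\<beta> v)"
        obtain s1 s2 t1 t2 where stt: "s = (s1,s2)" "t = (t1,t2)" by (cases s, cases t) auto
        have in1: "s1 \<in> S" "t1 \<in> S" "{(s1,s2),(t1,t2)} \<in> ?F"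
          using st stt unfolding rel_on_def S_def by auto
        then have "s1 = t1 \<or> {s1,t1} \<in> ET" using lex_edgeD by metis
        moreover have "s1 \<in> T" "t1 \<in> T" using in1 ST by auto
        ultimately show "(fst s, fst t) \<in> (rel_on ET T)\<^sup>*"
          using stt unfolding rel_on_def by auto
      qed
      then show ?thesis by simp
    qed
    have Bc: "\<exists>s\<in>S. (a,s) \<in> (rel_on ET T)\<^sup>* \<and> (s,a) \<in> (rel_on ET T)\<^sup>*" if a: "a \<in> T" for a
    proof (cases "a \<in> S")
      case True then show ?thesis by blast
    next
      case False
      then have pa: "p a \<in> S" "a \<in> VT" using a unfolding Teq by auto
      then have "p a \<noteq> a" using False by auto
      then have e: "{a, p a} \<in> ET" using p1 by metis
      then have "(a, p a) \<in> rel_on ET T" "(p a, a) \<in> rel_on ET T"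
        using a pa ST unfolding rel_on_def by (auto simp: insert_commute)
      then show ?thesis using pa by blast
    qed
    obtain a0 where "a0 \<in> \<beta> v" using cb unfolding connected_in_iff by auto
    then have "fst a0 \<in> S" unfolding S_def by (cases a0) auto
    then have Tne: "T \<noteq> {}" using ST by auto
    have "\<forall>a\<in>T. \<forall>b\<in>T. (a,b) \<in> (rel_on ET T)\<^sup>*"
    proof (intro ballI)
      fix a b assume "a \<in> T" "b \<in> T"
      then obtain sa sb where "sa \<in> S" "sb \<in> S" "(a,sa) \<in> (rel_on ET T)\<^sup>*" "(sb,b) \<in> (rel_on ET T)\<^sup>*"
        using Bc by metis
      then show "(a,b) \<in> (rel_on ET T)\<^sup>*" using A by (meson rtrancl_trans)
    qed
    then show "connected_in ET {x \<in> VT. v \<in> B x}" using Tne unfolding connected_in_iff T_def by blast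
  next
    fix e assume e: "e \<in> E"
    obtain u w where uw: "e = {u,w}" "u \<in> V" "w \<in> V" using graph_edgeE[OF g e] by blast
    obtain a b where ab: "a \<in> \<beta> u" "b \<in> \<beta> w" "{a,b} \<in> ?F" using b3 e uw by blast
    obtain x i y j where xy: "a = (x,i)" "b = (y,j)" by (cases a, cases b) auto
    have xyVT: "x \<in> VT" "y \<in> VT" using bVT ab xy uw by auto
    have uC: "u \<in> C x" and wC: "w \<in> C y" using ab xy uw unfolding C_def by auto
    have "x = y \<or> {x,y} \<in> ET" using ab(3) xy lex_edgeD by metis
    then show "\<exists>x\<in>VT. e \<subseteq> B x"
    proof
      assume "x = y" then show ?thesis using uC wC xyVT uw unfolding B_def by auto
    next
      assume "{x,y} \<in> ET"
      then have "p x = y \<or> p y = x" using p2 by blast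
      then show ?thesis using uC wC xyVT uw unfolding B_def by auto
    qed
  qed
  then show ?thesis using cardB by blast
qed

lemma single_tree: "is_tree {0::nat} {}"
  unfolding is_tree_def
proof (intro conjI)
  show "graph {0::nat} {}" unfolding graph_def by simp
  show "connected_in {} {0::nat}" unfolding connected_in_iff by simp
  show "acyclic_graph {0::nat} {}" unfolding acyclic_graph_def
  proof
    assume "\<exists>c. distinct c \<and> length c \<ge> 3 \<and> set c \<subseteq> {0::nat} \<and>
        (\<forall>i. Suc i < length c \<longrightarrow> {c ! i, c ! Suc i} \<in> {}) \<and> {last c, hd c} \<in> {}"
    then show False by auto
  qed
qed

theorem lemma12:
  fixes V :: "'a set" and E :: "'a set set"
  assumes "graph V E"
  shows "int (ltp V E) - 1 \<le> treewidth V E \<and> treewidth V E \<le> 2 * int (ltp V E) - 1"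
proof -
  define P where "P m = (\<exists>VT ET B. tree_decomposition V E VT ET B \<and> (\<forall>x\<in>VT. card (B x) \<le> m))" for m
  define Q where "Q k = (\<exists>(VT :: nat set) ET. is_tree VT ET \<and>
      is_minor V E (lex_verts VT k) (lex_edges VT ET k))" for k
  have tw: "treewidth V E = int (Least P) - 1" unfolding treewidth_def P_def by simp
  have lt: "ltp V E = Least Q" unfolding ltp_def Q_def by simp
  have "tree_decomposition V E {0} {} (\<lambda>_. V)"
    unfolding tree_decomposition_def
  proof (intro conjI ballI)
    show "is_tree {0::nat} {}" by (rule single_tree)
    fix v assume "v \<in> V"
    then have "{x \<in> {0::nat}. v \<in> V} = {0}" by auto
    then show "connected_in {} {x \<in> {0::nat}. v \<in> V}" unfolding connected_in_iff by simp
  next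
    fix e assume "e \<in> E"
    then show "\<exists>x\<in>{0::nat}. e \<subseteq> V" using graph_edgeE[OF assms] by blast
  qed simp
  then have "P (card V)" unfolding P_def by blast
  then have PL: "P (Least P)" by (rule LeastI)
  then obtain VT ET B where td: "tree_decomposition V E VT ET B" "\<forall>x\<in>VT. card (B x) \<le> Least P"
    unfolding P_def by blast
  have "Q (Least P)" unfolding Q_def using td_to_minor[OF assms td] td(1)
    unfolding tree_decomposition_def by blast
  then have le1: "Least Q \<le> Least P" by (rule Least_le)
  have "Q (Least Q)" using \<open>Q (Least P)\<close> by (rule LeastI)
  then obtain VT' :: "nat set" and ET' where "is_tree VT' ET'"
    "is_minor V E (lex_verts VT' (Least Q)) (lex_edges VT' ET' (Least Q))" unfolding Q_def by blast
  then have "P (2 * Least Q)" using minor_to_td[OF assms] unfolding P_def by blast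
  then have le2: "Least P \<le> 2 * Least Q" by (rule Least_le)
  show ?thesis unfolding tw lt using le1 le2 by linarith
qed

end
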